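(* Let $\bar x\in\mathbb{C}^n$ be a sparsest solution of problem (P), i.e. an optimal solution of (P). Suppose $X^*\in\mathbb{C}^{(n+1)\times(n+1)}$ satisfies all of the following: - $B(X^* )=y$, where $y=(y_1,\dots,y_N)$; - $X^*$ is Hermitian positive semidefinite; - $\operatorname{rank}(X^* )=1$; - $X^*_{1,1}=1$. Suppose further that $B$ is $(\epsilon,2\|X^*\|_0)$-RIP for some $\epsilon<1$. Then: - $X^*=\begin{bmatrix}1\\ \bar x\end{bmatrix}\begin{bmatrix}1 & \bar x^H\end{bmatrix}$; - $X^*_{2:n+1,1}=\bar x$; - $X^*$ is the unique matrix with the properties listed above, and $\bar x$ is the unique sparsest solution of (P).
   Context: Fix integers $n,N\ge 1$ and data $a_i\in\mathbb{C}$, $b_i,c_i\in\mathbb{C}^n$, $Q_i\in\mathbb{C}^{n\times n}$, $y_i\in\mathbb{C}$ for $i=1,\dots,N$. Problem (P) is $$\min_{x\in\mathbb{C}^n}\|x\|_0\quad\text{subject to}\quad y_i=a_i+b_i^H x+x^H c_i+x^H Q_i x,\quad i=1,\dots,N.$$ Here $\|\cdot\|_0$ counts the nonzero entries of a vector or matrix, and ${}^H$ denotes conjugate transpose. Let $\Phi_i=\begin{bmatrix} a_i & b_i^H\\ c_i & Q_i\end{bmatrix}\in\mathbb{C}^{(n+1)\times(n+1)}$. Define the linear operator $B:\mathbb{C}^{(n+1)\times(n+1)}\to\mathbb{C}^N$ by $B(X)=(\operatorname{tr}(\Phi_i X))_{i=1}^N$. A linear operator $B$ of this form is called $(\epsilon,k)$-RIP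 if $\left|\frac{\|B(X)\|^2}{\|X\|^2}-1\right|<\epsilon$ for every nonzero $X\in\mathbb{C}^{(n+1)\times(n+1)}$ with $\|X\|_0\le k$. In this condition $\|B(X)\|$ is the Euclidean norm in $\mathbb{C}^N$ and $\|X\|$ is the spectral norm. $X_{2:n+1,1}$ denotes the vector formed by entries $2,\dots,n+1$ of the first column of $X$. *)

theory Defs
  imports "Jordan_Normal_Form.Schur_Decomposition" "Jordan_Normal_Form.DL_Rank"
begin

text \<open>Matrices and vectors are Jordan_Normal_Form matrices/vectors over complex,
  indexed from 0. Row/column 0 of an (n+1)x(n+1) matrix plays the role of the
  paper's index 1.\<close>

definition mtrace :: "complex mat \<Rightarrow> complex" where
  "mtrace A = (\<Sum>i<dim_row A. A $$ (i, i))"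

definition vnnz :: "complex vec \<Rightarrow> nat" where
  "vnnz v = card {i. i < dim_vec v \<and> v $ i \<noteq> 0}"

definition mnnz :: "complex mat \<Rightarrow> nat" where
  "mnnz A = card {(i, j). i < dim_row A \<and> j < dim_col A \<and> A $$ (i, j) \<noteq> 0}"

definition vnorm :: "complex vec \<Rightarrow> real" where
  "vnorm v = sqrt (\<Sum>i<dim_vec v. (cmod (v $ i))\<^sup>2)"

definition spec_norm :: "complex mat \<Rightarrow> real" where
  "spec_norm A = Sup {vnorm (A *\<^sub>v v) | v. v \<in> carrier_vec (dim_col A) \<and> vnorm v = 1}"

definition hermitian_mat :: "complex mat \<Rightarrow> bool" where
  "hermitian_mat A \<longleftrightarrow> A \<in> carrier_mat (dim_row A) (dim_row A) \<and> mat_adjoint A = A"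

definition psd_mat :: "complex mat \<Rightarrow> bool" where
  "psd_mat A \<longleftrightarrow> hermitian_mat A \<and>
     (\<forall>v \<in> carrier_vec (dim_row A). conjugate v \<bullet> (A *\<^sub>v v) \<in> \<real> \<and>
                                   0 \<le> Re (conjugate v \<bullet> (A *\<^sub>v v)))"

text \<open>The data matrices Phi_i = [a_i, b_i^H; c_i, Q_i].\<close>
definition Phi :: "nat \<Rightarrow> complex \<Rightarrow> complex vec \<Rightarrow> complex vec \<Rightarrow> complex mat \<Rightarrow> complex mat" where
  "Phi n a b c Q = mat (n+1) (n+1) (\<lambda>(r, s).
      if r = 0 \<and> s = 0 then a
      else if r = 0 then cnj (b $ (s - 1))
      else if s = 0 then c $ (r - 1)
      else Q $$ (r - 1, s - 1))"

definition Bop :: "nat \<Rightarrow> nat \<Rightarrow> (nat \<Rightarrow> complex) \<Rightarrow> (nat \<Rightarrow> complex vec) \<Rightarrow>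
    (nat \<Rightarrow> complex vec) \<Rightarrow> (nat \<Rightarrow> complex mat) \<Rightarrow> complex mat \<Rightarrow> complex vec" where
  "Bop n N a b c Q X = vec N (\<lambda>i. mtrace (Phi n (a i) (b i) (c i) (Q i) * X))"

definition is_RIP :: "nat \<Rightarrow> nat \<Rightarrow> (nat \<Rightarrow> complex) \<Rightarrow> (nat \<Rightarrow> complex vec) \<Rightarrow>
    (nat \<Rightarrow> complex vec) \<Rightarrow> (nat \<Rightarrow> complex mat) \<Rightarrow> real \<Rightarrow> nat \<Rightarrow> bool" where
  "is_RIP n N a b c Q eps k \<longleftrightarrow>
     (\<forall>X \<in> carrier_mat (n+1) (n+1). X \<noteq> 0\<^sub>m (n+1) (n+1) \<and> mnnz X \<le> k \<longrightarrow>
        \<bar>(vnorm (Bop n N a b c Q X))\<^sup>2 / (spec_norm X)\<^sup>2 - 1\<bar> < eps)"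

definition feasibleP :: "nat \<Rightarrow> nat \<Rightarrow> (nat \<Rightarrow> complex) \<Rightarrow> (nat \<Rightarrow> complex vec) \<Rightarrow>
    (nat \<Rightarrow> complex vec) \<Rightarrow> (nat \<Rightarrow> complex mat) \<Rightarrow> complex vec \<Rightarrow> complex vec \<Rightarrow> bool" where
  "feasibleP n N a b c Q y x \<longleftrightarrow> x \<in> carrier_vec n \<and>
     (\<forall>i<N. y $ i = a i + (conjugate (b i) \<bullet> x) + (conjugate x \<bullet> c i)
                     + (conjugate x \<bullet> (Q i *\<^sub>v x)))"

definition optimalP :: "nat \<Rightarrow> nat \<Rightarrow> (nat \<Rightarrow> complex) \<Rightarrow> (nat \<Rightarrow> complex vec) \<Rightarrow>
    (nat \<Rightarrow> complex vec) \<Rightarrow> (nat \<Rightarrow> complex mat) \<Rightarrow> complex vec \<Rightarrow> complex vec \<Rightarrow> bool" where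
  "optimalP n N a b c Q y x \<longleftrightarrow> feasibleP n N a b c Q y x \<and>
     (\<forall>z. feasibleP n N a b c Q y z \<longrightarrow> vnnz x \<le> vnnz z)"

definition lifted_props :: "nat \<Rightarrow> nat \<Rightarrow> (nat \<Rightarrow> complex) \<Rightarrow> (nat \<Rightarrow> complex vec) \<Rightarrow>
    (nat \<Rightarrow> complex vec) \<Rightarrow> (nat \<Rightarrow> complex mat) \<Rightarrow> complex vec \<Rightarrow> complex mat \<Rightarrow> bool" where
  "lifted_props n N a b c Q y X \<longleftrightarrow> X \<in> carrier_mat (n+1) (n+1) \<and>
     Bop n N a b c Q X = y \<and> hermitian_mat X \<and> psd_mat X \<and>
     vec_space.rank (n+1) X = 1 \<and> X $$ (0, 0) = 1"

definition lift_outer :: "complex vec \<Rightarrow> complex mat" where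
  "lift_outer x = (let u = vCons 1 x in
     mat (dim_vec u) (dim_vec u) (\<lambda>(i, j). u $ i * cnj (u $ j)))"

text \<open>X_{2:n+1,1}.\<close>
definition first_col_tail :: "nat \<Rightarrow> complex mat \<Rightarrow> complex vec" where
  "first_col_tail n X = vec n (\<lambda>i. X $$ (i + 1, 0))"

end

theory Submission imports Defs begin

lemma rank1_col:
  fixes X :: "complex mat"
  assumes X: "X \<in> carrier_mat m m" and r: "vec_space.rank m X = 1"
    and x00: "X $$ (0,0) = 1" and j: "j < m"
  shows "col X j = X $$ (0,j) \<cdot>\<^sub>v col X 0"
proof (rule ccontr)
  interpret vs: vec_space "TYPE(complex)" m .
  assume ne: "col X j \<noteq> X $$ (0,j) \<cdot>\<^sub>v col X 0"
  define u where "u = col X 0"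
  define w where "w = col X j"
  have m0: "0 < m" using j by simp
  have u: "u \<in> carrier_vec m" and w: "w \<in> carrier_vec m" using X j m0 by (auto simp: u_def w_def)
  have u0: "u $ 0 = 1" using x00 X m0 by (simp add: u_def)
  have w0: "w $ 0 = X $$ (0,j)" using X m0 j by (simp add: w_def)
  have ne': "w \<noteq> w $ 0 \<cdot>\<^sub>v u" using ne w0 by (simp add: u_def w_def)
  have uw: "u \<noteq> w" using ne' u0 u by (metis smult_carrier_vec one_smult_vec)
  have indep: "vs.lin_indpt {u, w}"
    apply (rule vs.finite_lin_indpt2)
    subgoal by simp
    subgoal using u w by simp
    subgoal premises p for a
    proof -
    have lc: "vs.lincomb a {u,w} = 0\<^sub>v m" using p by simp
    have idx: "a u * u $ i + a w * w $ i = 0" if i: "i < m" for i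
    proof -
      have "vs.lincomb a {u,w} $ i = (\<Sum>x\<in>{u,w}. a x * x $ i)"
        by (rule vs.lincomb_index[OF i]) (use u w in auto)
      then show ?thesis using lc uw i by simp
    qed
    have au: "a u = - a w * w $ 0" using idx[OF m0] u0 by (simp add: algebra_simps eq_neg_iff_add_eq_0)
    have aw: "a w = 0"
    proof (rule ccontr)
      assume aw: "a w \<noteq> 0"
      have "w = w $ 0 \<cdot>\<^sub>v u"
      proof (rule eq_vecI)
        fix i assume "i < dim_vec (w $ 0 \<cdot>\<^sub>v u)"
        then have i: "i < m" using u by simp
        have "a w * (w $ i - w $ 0 * u $ i) = 0" using idx[OF i] au by (simp add: algebra_simps)
        then show "w $ i = (w $ 0 \<cdot>\<^sub>v u) $ i" using aw i u by simp
      qed (use u w in simp)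
      then show False using ne' by simp
    qed
    show ?thesis using au aw by simp
    qed
    done
  have sub: "{u,w} \<subseteq> set (cols X)" using X j m0 by (auto simp: u_def w_def cols_def)
  have "vs.rank X \<ge> card {u,w}" by (rule vs.rank_ge_card_indpt[OF X sub indep])
  then show False using r uw by simp
qed


lemma mtrace_mult:
  assumes "A \<in> carrier_mat m m" "X \<in> carrier_mat m m"
  shows "mtrace (A * X) = (\<Sum>i<m. \<Sum>k<m. A $$ (i,k) * X $$ (k,i))"
  using assms unfolding mtrace_def
  by (auto simp: scalar_prod_def atLeast0LessThan intro!: sum.cong)

lemma Phi_carrier: "Phi n a b c Q \<in> carrier_mat (n+1) (n+1)"
  by (simp add: Phi_def)

lemma lift_outer_carrier: "x \<in> carrier_vec n \<Longrightarrow> lift_outer x \<in> carrier_mat (n+1) (n+1)"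
  by (simp add: lift_outer_def Let_def)

lemma lift_outer_idx:
  "x \<in> carrier_vec n \<Longrightarrow> i < n+1 \<Longrightarrow> j < n+1 \<Longrightarrow>
    lift_outer x $$ (i,j) = vCons 1 x $ i * cnj (vCons 1 x $ j)"
  by (simp add: lift_outer_def Let_def)

lemma Bop_dim: "Bop n N a b c Q X \<in> carrier_vec N"
  by (simp add: Bop_def)

lemma Bop_diff:
  assumes "X \<in> carrier_mat (n+1) (n+1)" "Y \<in> carrier_mat (n+1) (n+1)"
  shows "Bop n N a b c Q (X - Y) = Bop n N a b c Q X - Bop n N a b c Q Y"
proof (rule eq_vecI)
  fix i assume "i < dim_vec (Bop n N a b c Q X - Bop n N a b c Q Y)"
  then have i: "i < N" by (simp add: Bop_def)
  let ?P = "Phi n (a i) (b i) (c i) (Q i)"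
  have PC: "?P \<in> carrier_mat (n+1) (n+1)" by (rule Phi_carrier)
  have "mtrace (?P * (X - Y)) = (\<Sum>i<n+1. \<Sum>k<n+1. ?P $$ (i,k) * (X $$ (k,i) - Y $$ (k,i)))"
    using assms unfolding mtrace_mult[OF PC minus_carrier_mat[OF assms(2)]] by (intro sum.cong refl) simp
  also have "\<dots> = mtrace (?P * X) - mtrace (?P * Y)"
    using assms by (simp add: mtrace_mult[OF PC] right_diff_distrib sum_subtractf)
  finally have "mtrace (?P * (X - Y)) = mtrace (?P * X) - mtrace (?P * Y)" .
  then show "Bop n N a b c Q (X - Y) $ i = (Bop n N a b c Q X - Bop n N a b c Q Y) $ i"
    using i by (simp add: Bop_def)
qed (simp add: Bop_def)

lemma trace_lift:
  assumes x: "x \<in> carrier_vec n" and b: "b \<in> carrier_vec n" and c: "c \<in> carrier_vec n"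
    and Q: "Q \<in> carrier_mat n n"
  shows "mtrace (Phi n a b c Q * lift_outer x) =
     a + (conjugate b \<bullet> x) + (conjugate x \<bullet> c) + (conjugate x \<bullet> (Q *\<^sub>v x))"
proof -
  let ?u = "vCons 1 x"
  have "mtrace (Phi n a b c Q * lift_outer x) =
     (\<Sum>i<n+1. \<Sum>k<n+1. Phi n a b c Q $$ (i,k) * (?u $ k * cnj (?u $ i)))"
    using mtrace_mult[OF Phi_carrier lift_outer_carrier[OF x]] lift_outer_idx[OF x] by simp
  also have "\<dots> = a + (\<Sum>k<n. cnj (b $ k) * x $ k) + (\<Sum>i<n. c $ i * cnj (x $ i))
      + (\<Sum>i<n. \<Sum>k<n. Q $$ (i,k) * (x $ k * cnj (x $ i)))"
    by (simp del: sum.lessThan_Suc add: sum.lessThan_Suc_shift Phi_def sum.distrib algebra_simps)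
  also have "\<dots> = a + (conjugate b \<bullet> x) + (conjugate x \<bullet> c) + (conjugate x \<bullet> (Q *\<^sub>v x))"
    using x b c Q
    by (simp add: scalar_prod_def atLeast0LessThan sum_distrib_left algebra_simps)
  finally show ?thesis .
qed


lemma mnnz_lift:
  assumes x: "x \<in> carrier_vec n"
  shows "mnnz (lift_outer x) = Suc (vnnz x) * Suc (vnnz x)"
proof -
  let ?u = "vCons 1 x"
  define S where "S = {i. i < n+1 \<and> ?u $ i \<noteq> 0}"
  have S: "S = insert 0 (Suc ` {i. i < n \<and> x $ i \<noteq> 0})"
  proof (rule subset_antisym; rule subsetI)
    fix i assume "i \<in> S"
    then show "i \<in> insert 0 (Suc ` {i. i < n \<and> x $ i \<noteq> 0})"
      unfolding S_def by (cases i) auto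
  next
    fix i assume "i \<in> insert 0 (Suc ` {i. i < n \<and> x $ i \<noteq> 0})"
    then show "i \<in> S" unfolding S_def by auto
  qed
  have cS: "card S = Suc (vnnz x)"
    unfolding S vnnz_def using x by (simp add: card_image)
  have "{(i, j). i < dim_row (lift_outer x) \<and> j < dim_col (lift_outer x) \<and> lift_outer x $$ (i, j) \<noteq> 0}
        = S \<times> S"
    using x unfolding S_def lift_outer_def Let_def by auto
  then show ?thesis unfolding mnnz_def using cS by (simp add: card_cartesian_product)
qed

lemma mnnz_diff:
  assumes "X \<in> carrier_mat m m" "Y \<in> carrier_mat m m"
  shows "mnnz (X - Y) \<le> mnnz X + mnnz Y"
proof -
  let ?s = "\<lambda>X. {(i, j). i < dim_row X \<and> j < dim_col X \<and> X $$ (i, j) \<noteq> 0}"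
  have "?s (X - Y) \<subseteq> ?s X \<union> ?s Y" using assms by auto
  moreover have "finite (?s X)"
    by (rule finite_subset[of _ "{..<dim_row X} \<times> {..<dim_col X}"]) auto
  moreover have "finite (?s Y)"
    by (rule finite_subset[of _ "{..<dim_row Y} \<times> {..<dim_col Y}"]) auto
  ultimately have "card (?s (X - Y)) \<le> card (?s X \<union> ?s Y)" by (intro card_mono) auto
  also have "\<dots> \<le> card (?s X) + card (?s Y)" by (rule card_Un_le)
  finally show ?thesis unfolding mnnz_def .
qed

lemma first_col_tail_lift: "x \<in> carrier_vec n \<Longrightarrow> first_col_tail n (lift_outer x) = x"
  by (auto simp: first_col_tail_def lift_outer_def Let_def)

lemma lifted_structure:
  assumes L: "lifted_props n N a b c Q y X"
  shows "X = lift_outer (first_col_tail n X)"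
proof -
  have X: "X \<in> carrier_mat (n+1) (n+1)" and r: "vec_space.rank (n+1) X = 1"
    and x00: "X $$ (0,0) = 1" and H: "mat_adjoint X = X"
    using L by (auto simp: lifted_props_def hermitian_mat_def)
  let ?x = "first_col_tail n X"
  have ui: "vCons 1 ?x $ i = X $$ (i, 0)" if "i < n+1" for i
    using that x00 by (cases i) (auto simp: first_col_tail_def)
  have herm: "X $$ (0, j) = cnj (X $$ (j, 0))" if "j < n+1" for j
  proof -
    have "X $$ (0,j) = mat_adjoint X $$ (0,j)" using H by simp
    also have "\<dots> = cnj (X $$ (j, 0))" using X that by (simp add: mat_adjoint_def mat_of_rows_def)
    finally show ?thesis .
  qed
  show ?thesis
  proof (rule eq_matI)
    fix i j assume ij: "i < dim_row (lift_outer (first_col_tail n X))" "j < dim_col (lift_outer (first_col_tail n X))"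
    then have i: "i < n+1" and j: "j < n+1" by (simp_all add: lift_outer_def first_col_tail_def Let_def)
    have "col X j $ i = (X $$ (0,j) \<cdot>\<^sub>v col X 0) $ i" using rank1_col[OF X r x00 j] by simp
    then have "X $$ (i,j) = X $$ (0,j) * X $$ (i,0)" using X i j by simp
    then show "X $$ (i,j) = lift_outer ?x $$ (i,j)"
      using lift_outer_idx[of ?x n i j] i j ui herm[OF j] ui[OF i] ui[OF j]
      by (simp add: first_col_tail_def mult.commute)
  qed (use X in \<open>simp_all add: lift_outer_def first_col_tail_def Let_def\<close>)
qed


lemma vnorm_zero: "vnorm (0\<^sub>v N) = 0"
  by (simp add: vnorm_def)

lemma rip_eq:
  assumes X: "X \<in> carrier_mat (n+1) (n+1)" and Y: "Y \<in> carrier_mat (n+1) (n+1)"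
    and B: "Bop n N a b c Q X = Bop n N a b c Q Y" and e: "eps < 1"
    and R: "is_RIP n N a b c Q eps k" and k: "mnnz X + mnnz Y \<le> k"
  shows "X = Y"
proof (rule ccontr)
  assume ne: "X \<noteq> Y"
  have D: "X - Y \<in> carrier_mat (n+1) (n+1)" using Y by (rule minus_carrier_mat)
  have D0: "X - Y \<noteq> 0\<^sub>m (n+1) (n+1)"
  proof
    assume "X - Y = 0\<^sub>m (n+1) (n+1)"
    then have "X $$ (i,j) = Y $$ (i,j)" if "i < n+1" "j < n+1" for i j
      using that X Y by (metis index_minus_mat(1) index_zero_mat(1) carrier_matD right_minus_eq)
    then have "X = Y" using X Y by (intro eq_matI) auto
    then show False using ne by simp
  qed
  have Dk: "mnnz (X - Y) \<le> k" using mnnz_diff[OF X Y] k by simp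
  have "Bop n N a b c Q (X - Y) = 0\<^sub>v N"
    using Bop_diff[OF X Y] B Bop_dim[of n N a b c Q Y] by simp
  then have "\<bar>(vnorm (Bop n N a b c Q (X - Y)))\<^sup>2 / (spec_norm (X - Y))\<^sup>2 - 1\<bar> = 1"
    by (simp add: vnorm_zero)
  moreover have "\<bar>(vnorm (Bop n N a b c Q (X - Y)))\<^sup>2 / (spec_norm (X - Y))\<^sup>2 - 1\<bar> < eps"
    using R D D0 Dk unfolding is_RIP_def by blast
  ultimately show False using e by simp
qed

lemma feas_lift:
  assumes bc: "\<And>i. i < N \<Longrightarrow> b i \<in> carrier_vec n" "\<And>i. i < N \<Longrightarrow> c i \<in> carrier_vec n"
    and Qc: "\<And>i. i < N \<Longrightarrow> Q i \<in> carrier_mat n n"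
    and y: "y \<in> carrier_vec N" and x: "x \<in> carrier_vec n"
  shows "feasibleP n N a b c Q y x \<longleftrightarrow> Bop n N a b c Q (lift_outer x) = y"
proof -
  have "Bop n N a b c Q (lift_outer x) = y \<longleftrightarrow> (\<forall>i<N. Bop n N a b c Q (lift_outer x) $ i = y $ i)"
    using y by (auto simp: Bop_def intro!: eq_vecI)
  also have "\<dots> \<longleftrightarrow> (\<forall>i<N. y $ i = a i + (conjugate (b i) \<bullet> x) + (conjugate x \<bullet> c i)
                     + (conjugate x \<bullet> (Q i *\<^sub>v x)))"
    using trace_lift[OF x bc(1) bc(2) Qc] by (auto simp: Bop_def)
  finally show ?thesis using x unfolding feasibleP_def by auto
qed

lemma core:
  assumes bc: "\<And>i. i < N \<Longrightarrow> b i \<in> carrier_vec n" "\<And>i. i < N \<Longrightarrow> c i \<in> carrier_vec n"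
    and Qc: "\<And>i. i < N \<Longrightarrow> Q i \<in> carrier_mat n n"
    and y: "y \<in> carrier_vec N"
    and opt: "optimalP n N a b c Q y xbar"
    and L: "lifted_props n N a b c Q y X"
    and e: "eps < 1" and R: "is_RIP n N a b c Q eps (2 * mnnz X)"
  shows "X = lift_outer xbar"
proof -
  let ?x = "first_col_tail n X"
  have Xe: "X = lift_outer ?x" by (rule lifted_structure[OF L])
  have xc: "?x \<in> carrier_vec n" by (simp add: first_col_tail_def)
  have X: "X \<in> carrier_mat (n+1) (n+1)" and BX: "Bop n N a b c Q X = y"
    using L by (auto simp: lifted_props_def)
  have fx: "feasibleP n N a b c Q y ?x"
    using feas_lift[OF bc Qc y xc] BX Xe by simp
  have fb: "feasibleP n N a b c Q y xbar" and le: "vnnz xbar \<le> vnnz ?x"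
    using opt fx unfolding optimalP_def by auto
  have xb: "xbar \<in> carrier_vec n" using fb unfolding feasibleP_def by simp
  have BY: "Bop n N a b c Q (lift_outer xbar) = y" using feas_lift[OF bc Qc y xb] fb by simp
  have "mnnz (lift_outer xbar) \<le> mnnz X"
    using mnnz_lift[OF xb] mnnz_lift[OF xc] le Xe by (metis Suc_le_mono mult_le_mono)
  then show ?thesis
    using rip_eq[OF X lift_outer_carrier[OF xb] _ e R] BX BY by simp
qed

theorem theorem1:
  fixes n N :: nat and a :: "nat \<Rightarrow> complex" and b c :: "nat \<Rightarrow> complex vec"
    and Q :: "nat \<Rightarrow> complex mat" and y xbar :: "complex vec" and Xs :: "complex mat"
    and eps :: real
  assumes "n \<ge> 1" and "N \<ge> 1"
    and "\<And>i. i < N \<Longrightarrow> b i \<in> carrier_vec n"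
    and "\<And>i. i < N \<Longrightarrow> c i \<in> carrier_vec n"
    and "\<And>i. i < N \<Longrightarrow> Q i \<in> carrier_mat n n"
    and "y \<in> carrier_vec N"
    and "optimalP n N a b c Q y xbar"
    and "lifted_props n N a b c Q y Xs"
    and "eps < 1"
    and "is_RIP n N a b c Q eps (2 * mnnz Xs)"
  shows "Xs = lift_outer xbar \<and> first_col_tail n Xs = xbar \<and>
         (\<forall>X. lifted_props n N a b c Q y X \<and>
             (\<exists>eps'. eps' < 1 \<and> is_RIP n N a b c Q eps' (2 * mnnz X)) \<longrightarrow> X = Xs) \<and>
         (\<forall>x. optimalP n N a b c Q y x \<longrightarrow> x = xbar)"
proof -
  note bc = assms(3) assms(4)
  have fb: "feasibleP n N a b c Q y xbar" using assms(7) unfolding optimalP_def by simp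
  have xb: "xbar \<in> carrier_vec n" using fb unfolding feasibleP_def by simp
  have P1: "Xs = lift_outer xbar" by (rule core[OF bc assms(5,6,7,8,9,10)])
  have P2: "first_col_tail n Xs = xbar" using P1 first_col_tail_lift[OF xb] by simp
  have P3: "X = Xs" if "lifted_props n N a b c Q y X"
     "\<exists>eps'. eps' < 1 \<and> is_RIP n N a b c Q eps' (2 * mnnz X)" for X
    using that core[OF bc assms(5,6,7)] P1 by blast
  have P4: "x = xbar" if o: "optimalP n N a b c Q y x" for x
  proof -
    have fx: "feasibleP n N a b c Q y x" and le: "vnnz x \<le> vnnz xbar"
      using o fb unfolding optimalP_def by auto
    have xc: "x \<in> carrier_vec n" using fx unfolding feasibleP_def by simp
    have BY: "Bop n N a b c Q (lift_outer x) = y" using feas_lift[OF bc assms(5,6) xc] fx by simp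
    have BX: "Bop n N a b c Q Xs = y" and X: "Xs \<in> carrier_mat (n+1) (n+1)"
      using assms(8) by (auto simp: lifted_props_def)
    have "mnnz (lift_outer x) \<le> mnnz Xs"
      using mnnz_lift[OF xb] mnnz_lift[OF xc] le P1 by (metis Suc_le_mono mult_le_mono)
    then have "Xs = lift_outer x"
      using rip_eq[OF X lift_outer_carrier[OF xc] _ assms(9,10)] BX BY by simp
    then show ?thesis using P2 first_col_tail_lift[OF xc] by simp
  qed
  show ?thesis using P1 P2 P3 P4 by blast
qed

end
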